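(* Let $d\ge2$ and $a\in(0,2)$. For any $p\in\big(1,\frac{d}{d-a}\big]$ there is a constant $C_{p,d,a}>0$ such that for every $u\in\mathcal P(\mathbb R^d)$, $$\|u\|_{L^p(\mathbb R^d)}\le C_{p,d,a}\,I_a(u)^{1-\frac da\left(\frac1p-\frac{d-a}{d}\right)}.$$
   Context: With $\Phi(x,y)=(x-y)(\ln x-\ln y)$, the fractional Fisher information of a probability density $u$ on $\mathbb R^d$ is $I_a(u)=\frac12\int_{\mathbb R^d\times\mathbb R^d}\frac{\Phi(u(x),u(y))}{|x-y|^{d+a}}dxdy$. *)

theory Defs
  imports "HOL-Analysis.Analysis"
begin

text \<open>Phi(s,t) = (s - t)(ln s - ln t) on [0,oo)^2, extended-valued:
  Phi(s,s) = 0 (in particular Phi(0,0) = 0), and Phi(0,t) = Phi(t,0) = +oo for t > 0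
  (the limit value).\<close>
definition Phi :: "real \<Rightarrow> real \<Rightarrow> ennreal" where
  "Phi s t = (if s = t then 0
              else if s \<le> 0 \<or> t \<le> 0 then \<infinity>
              else ennreal ((s - t) * (ln s - ln t)))"

definition frac_fisher :: "real \<Rightarrow> ('a::euclidean_space \<Rightarrow> real) \<Rightarrow> ennreal" where
  "frac_fisher a u = ennreal (1/2) *
     (\<integral>\<^sup>+ z. Phi (u (fst z)) (u (snd z)) /
               ennreal (norm (fst z - snd z) powr (real DIM('a) + a)) \<partial>(lborel \<Otimes>\<^sub>M lborel))"

definition prob_density :: "('a::euclidean_space \<Rightarrow> real) \<Rightarrow> bool" where
  "prob_density u \<longleftrightarrow> u \<in> borel_measurable lborel \<and> (\<forall>x. 0 \<le> u x)
      \<and> (\<integral>\<^sup>+ x. ennreal (u x) \<partial>lborel) = 1"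

definition Lp_pow :: "real \<Rightarrow> ('a::euclidean_space \<Rightarrow> real) \<Rightarrow> ennreal" where
  "Lp_pow p u = (\<integral>\<^sup>+ x. ennreal (\<bar>u x\<bar> powr p) \<partial>lborel)"

end

theory Submission
  imports Defs
begin


lemma suminf_ennreal_le_real:
  assumes "\<And>k. 0 \<le> f k" "\<And>n. (\<Sum>k<n. f k) \<le> R"
  shows "(\<Sum>k. ennreal (f k)) \<le> ennreal R"
  unfolding suminf_eq_SUP
proof (rule SUP_least)
  fix n show "(\<Sum>k<n. ennreal (f k)) \<le> ennreal R"
    using assms by (subst sum_ennreal) (auto intro: ennreal_leI)
qed

lemma sum_le_suminf_ennreal:
  fixes f :: "nat \<Rightarrow> ennreal"
  shows "(\<Sum>k<n. f k) \<le> (\<Sum>k. f k)"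
  unfolding suminf_eq_SUP by (rule SUP_upper) auto

definition Kc :: "real \<Rightarrow> real" where
  "Kc r = 4 * ((1/8) powr (1/(1-r))) powr (-r)"

lemma disc_step:
  fixes r l x y :: real
  assumes r: "0<r" "r<1" and l: "l>0" and xy: "0 \<le> y" "y \<le> x"
  shows "4*l * y powr (1-r) \<le> (l * x powr (1-r))/2 + Kc r * (l * y * x powr (-r))"
proof -
  define t0 where "t0 = (1/8::real) powr (1/(1-r))"
  have t0pos: "t0 > 0" unfolding t0_def by simp
  have t0r: "t0 powr (1-r) = 1/8" unfolding t0_def using r
    by (simp add: powr_powr)
  show ?thesis
  proof (cases "y \<le> t0 * x")
    case True
    have "y powr (1-r) \<le> (t0*x) powr (1-r)" using xy r True by (intro powr_mono2) auto
    also have "\<dots> = x powr (1-r) / 8" using t0pos xy by (simp add: powr_mult t0r)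
    finally have "4*l*y powr (1-r) \<le> 4*l*(x powr (1-r)/8)" using l by (intro mult_left_mono) auto
    moreover have "0 \<le> Kc r * (l * y * x powr (-r))" unfolding Kc_def using l xy by simp
    ultimately show ?thesis by simp
  next
    case False
    have tx: "t0 * x \<ge> 0" using t0pos xy by simp
    then have ypos: "y > 0" "t0 * x < y" using False by auto
    have xpos: "x > 0" using ypos xy by simp
    have "y powr (1-r) = y * y powr (-r)" using ypos by (simp add: powr_diff powr_minus field_simps)
    also have "y powr (-r) \<le> (t0*x) powr (-r)" using ypos xpos t0pos r
      by (intro powr_mono2') auto
    then have "y * y powr (-r) \<le> y * (t0*x) powr (-r)" using ypos by (intro mult_left_mono) auto
    also have "(t0*x) powr (-r) = t0 powr (-r) * x powr (-r)" using t0pos xpos by (simp add: powr_mult)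
    finally have "4*l*y powr (1-r) \<le> 4*l*(y * (t0 powr (-r) * x powr (-r)))"
      using l by (intro mult_left_mono) auto
    also have "\<dots> = Kc r * (l * y * x powr (-r))" unfolding Kc_def t0_def by (simp only: mult_ac)
    finally have h: "4*l*y powr (1-r) \<le> Kc r * (l * y * x powr (-r))" .
    have "0 \<le> (l * x powr (1-r))/2" using l by simp
    with h show ?thesis by linarith
  qed
qed

lemma Kc_pos: "Kc r > 0" unfolding Kc_def by simp

lemma disc:
  fixes r l Bd :: real and a :: "nat \<Rightarrow> real"
  assumes r: "0<r" "r<1" and l: "l>0" and a0: "\<And>k. 0 \<le> a k" and dec: "\<And>k. a (Suc k) \<le> a k"
    and a0b: "a 0 \<le> 1/l"
    and B: "\<And>n. (\<Sum>k<n. l*4^k * a (Suc k) * a k powr (-r)) \<le> Bd"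
  shows "(\<Sum>k<n. l*4^k * a k powr (1-r)) \<le> 2 * l powr r + 2 * Kc r * Bd"
proof -
  define y where "y k = l*4^k * a k powr (1-r)" for k
  define b where "b k = l*4^k * a (Suc k) * a k powr (-r)" for k
  have step: "y (Suc k) \<le> y k / 2 + Kc r * b k" for k
    using disc_step[OF r, of "l*4^k" "a (Suc k)" "a k"] l a0 dec
    unfolding y_def b_def by (simp add: algebra_simps)
  have ynn: "y k \<ge> 0" for k unfolding y_def using l by simp
  have y0: "y 0 \<le> l powr r"
  proof -
    have "a 0 powr (1-r) \<le> (1/l) powr (1-r)" using a0 a0b r by (intro powr_mono2) auto
    then have "y 0 \<le> l * (1/l) powr (1-r)" unfolding y_def using l by (simp add: mult_left_mono)
    also have "\<dots> = l powr r" using l by (simp add: powr_divide powr_diff field_simps)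
    finally show ?thesis .
  qed
  have main: "(\<Sum>k<Suc m. y k) \<le> 2 * l powr r + 2 * Kc r * Bd" for m
  proof -
    have e1: "(\<Sum>k<Suc m. y k) = y 0 + (\<Sum>k<m. y (Suc k))" by (rule sum.lessThan_Suc_shift)
    have e2: "(\<Sum>k<m. y (Suc k)) \<le> (\<Sum>k<m. y k / 2 + Kc r * b k)" by (intro sum_mono step)
    have e3: "(\<Sum>k<m. y k / 2 + Kc r * b k) = (\<Sum>k<m. y k) / 2 + Kc r * (\<Sum>k<m. b k)"
      by (simp add: sum.distrib sum_divide_distrib sum_distrib_left)
    have e4: "Kc r * (\<Sum>k<m. b k) \<le> Kc r * Bd" using B[of m] Kc_pos[of r] unfolding b_def
      by (intro mult_left_mono) auto
    have e5: "(\<Sum>k<m. y k) \<le> (\<Sum>k<Suc m. y k)" using ynn by simp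
    from e1 e2 e3 e4 e5 have "(\<Sum>k<Suc m. y k) \<le> y 0 + (\<Sum>k<Suc m. y k)/2 + Kc r * Bd"
      by linarith
    then show ?thesis using y0 by linarith
  qed
  show ?thesis
  proof (cases n)
    case 0
    have "0 \<le> Bd" using B[of 0] by simp
    then show ?thesis using 0 l Kc_pos[of r] by simp
  next
    case (Suc m) then show ?thesis using main[of m] unfolding y_def by simp
  qed
qed

lemma suminf_mono_ennreal:
  fixes f g :: "nat \<Rightarrow> ennreal"
  assumes "\<And>k. f k \<le> g k"
  shows "(\<Sum>k. f k) \<le> (\<Sum>k. g k)"
  unfolding suminf_eq_SUP by (intro SUP_mono) (auto intro!: sum_mono assms)

lemma tail_bound:
  fixes r q p l S :: real and am :: "nat \<Rightarrow> real"
  assumes r: "0<r" "r<1" and q: "q * (1-r) = 1" and p: "1 \<le> p" "p \<le> q" and l: "l > 0"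
    and am: "\<And>k. 0 \<le> am k" and S: "\<And>n. (\<Sum>k<n. l*4^k * am k powr (1-r)) \<le> S"
  shows "(\<Sum>k<n. 4 powr p * (l*4^k) powr p * am k) \<le> 4 powr p * l powr (p-q) * S powr q"
proof -
  define y where "y k = l*4^k * am k powr (1-r)" for k
  have ynn: "y k \<ge> 0" for k unfolding y_def using l by simp
  have S0: "S \<ge> 0" using S[of 0] by simp
  have yS: "y k \<le> S" for k
  proof -
    have "y k \<le> (\<Sum>j<Suc k. y j)" using ynn by (intro member_le_sum) auto
    then show ?thesis using S[of "Suc k"] unfolding y_def by simp
  qed
  have q1: "q \<ge> 1" using p by simp
  have tm: "4 powr p * (l*4^k) powr p * am k \<le> 4 powr p * l powr (p-q) * (y k * S powr (q-1))" for k
  proof -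
    have lk: "l \<le> l*4^k" "l*4^k > 0" using l by auto
    have e1: "(l*4^k) powr p = (l*4^k) powr (p-q) * (l*4^k) powr q" by (simp flip: powr_add)
    have "y k powr q = (l*4^k) powr q * (am k powr (1-r)) powr q"
      unfolding y_def using lk am by (simp add: powr_mult)
    also have "(am k powr (1-r)) powr q = am k" using am q by (simp add: powr_powr mult.commute)
    finally have e2: "(l*4^k) powr q * am k = y k powr q" by simp
    have e3: "(l*4^k) powr (p-q) \<le> l powr (p-q)" using lk p l by (intro powr_mono2') auto
    have e4: "y k powr q \<le> y k * S powr (q-1)"
    proof (cases "y k = 0")
      case True then show ?thesis by simp
    next
      case False
      then have yp: "y k > 0" using ynn[of k] by simp
      have "y k powr q = y k powr (1 + (q-1))" by simp
      also have "\<dots> = y k powr 1 * y k powr (q-1)" by (rule powr_add)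
      also have "\<dots> = y k * y k powr (q-1)" using yp by simp
      also have "\<dots> \<le> y k * S powr (q-1)" using yp yS[of k] q1
        by (intro mult_left_mono powr_mono2) auto
      finally show ?thesis .
    qed
    have "4 powr p * (l*4^k) powr p * am k = 4 powr p * (l*4^k) powr (p-q) * y k powr q"
      using e1 e2 by (simp add: mult.assoc)
    also have "\<dots> \<le> 4 powr p * l powr (p-q) * (y k * S powr (q-1))"
      using e3 e4 by (intro mult_mono mult_left_mono) auto
    finally show ?thesis .
  qed
  have "(\<Sum>k<n. 4 powr p * (l*4^k) powr p * am k) \<le> (\<Sum>k<n. 4 powr p * l powr (p-q) * (y k * S powr (q-1)))"
    by (intro sum_mono tm)
  also have "\<dots> = 4 powr p * l powr (p-q) * S powr (q-1) * (\<Sum>k<n. y k)"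
    by (simp add: sum_distrib_left sum_distrib_right mult_ac)
  also have "\<dots> \<le> 4 powr p * l powr (p-q) * S powr (q-1) * S"
    using S[of n] unfolding y_def by (intro mult_left_mono) auto
  also have "4 powr p * l powr (p-q) * S powr (q-1) * S = 4 powr p * l powr (p-q) * S powr q"
  proof -
    have "S powr q = S powr ((q-1) + 1)" by simp
    also have "\<dots> = S powr (q-1) * S powr 1" by (rule powr_add)
    finally have "S powr q = S powr (q-1) * S powr 1" .
    then show ?thesis using S0 by (simp add: mult.assoc)
  qed
  finally show ?thesis .
qed



definition kern :: "real \<Rightarrow> 'a::euclidean_space \<Rightarrow> 'a \<Rightarrow> ennreal" where
  "kern s x y = 1 / ennreal (norm (x - y) powr s)"

lemma kern_meas[measurable]: "(\<lambda>y. kern s x y) \<in> borel_measurable lborel"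
  unfolding kern_def by measurable

lemma kern_meas2[measurable]: "(\<lambda>z. kern s (fst z) (snd z)) \<in> borel_measurable (lborel \<Otimes>\<^sub>M lborel)"
  unfolding kern_def by measurable

lemma kern_ge:
  assumes "norm (x - y) \<le> t" "t > 0" "s > 0"
  shows "ennreal (1 / t powr s) \<le> kern s x y"
proof (cases "x = y")
  case True then show ?thesis by (simp add: kern_def divide_ennreal_def)
next
  case False
  then have n: "norm (x - y) > 0" by simp
  have "kern s x y = ennreal (1 / norm (x - y) powr s)" unfolding kern_def
    using n by (subst divide_ennreal[symmetric]) auto
  moreover have "1 / t powr s \<le> 1 / norm (x - y) powr s" using assms n
    by (intro divide_left_mono powr_mono2) (auto intro!: mult_pos_pos)
  ultimately show ?thesis by (simp add: ennreal_leI)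
qed

lemma kern_le:
  assumes "norm (x - y) \<ge> t" "t > 0" "s > 0"
  shows "kern s x y \<le> ennreal (1 / t powr s)"
proof -
  have n: "norm (x - y) > 0" using assms(1,2) by linarith
  have "kern s x y = ennreal (1 / norm (x - y) powr s)" unfolding kern_def
    using n by (subst divide_ennreal[symmetric]) auto
  moreover have "1 / norm (x - y) powr s \<le> 1 / t powr s" using assms n
    by (intro divide_left_mono powr_mono2) (auto intro!: mult_pos_pos)
  ultimately show ?thesis by (simp add: ennreal_leI)
qed

lemma iso:
  fixes x :: "'a::euclidean_space" and E :: "'a set"
  assumes E: "E \<in> sets lborel" "emeasure lborel E < \<infinity>" and rho: "\<rho> > 0"
    and mE: "measure lborel E \<le> unit_ball_vol (real DIM('a)) * \<rho> ^ DIM('a)" and s: "s > 0"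
  shows "ennreal ((2 ^ DIM('a) - 1) * unit_ball_vol (real DIM('a)) * \<rho> ^ DIM('a) * (1 / (2*\<rho>) powr s))
     \<le> (\<integral>\<^sup>+y. indicator (-E) y * kern s x y \<partial>lborel)"
proof -
  define \<omega> where "\<omega> = unit_ball_vol (real DIM('a))"
  define B where "B = cball x \<rho>"
  define B2 where "B2 = cball x (2*\<rho>)"
  define K0 where "K0 = ennreal (1 / \<rho> powr s)"
  define K1 where "K1 = ennreal (1 / (2*\<rho>) powr s)"
  have Bs[measurable]: "B \<in> sets lborel" "B2 \<in> sets lborel" unfolding B_def B2_def by auto
  have Es[measurable]: "E \<in> sets lborel" using E by simp
  have Eb[simp]: "E \<in> sets borel" "B \<in> sets borel" "B2 \<in> sets borel" using E Bs by auto
  have mB: "emeasure lborel B = ennreal (\<omega> * \<rho> ^ DIM('a))" unfolding B_def \<omega>_def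
    using emeasure_cball[of \<rho> x] rho by simp
  have mB2: "emeasure lborel B2 = ennreal (\<omega> * (2*\<rho>) ^ DIM('a))" unfolding B2_def \<omega>_def
    using emeasure_cball[of "2*\<rho>" x] rho by simp
  have BB2: "B \<subseteq> B2" unfolding B_def B2_def using rho by auto
  have finB: "emeasure lborel B \<noteq> \<infinity>" using mB by simp
  have finB2: "emeasure lborel B2 \<noteq> \<infinity>" using mB2 by simp
  have finE: "emeasure lborel E \<noteq> \<infinity>" using E by simp
  have "measure lborel (E - B) = measure lborel E - measure lborel (E \<inter> B)"
    using finE E(1) by (subst measure_Diff[symmetric]) (auto intro!: arg_cong[where f="measure lborel"])
  moreover have "measure lborel (B - E) = measure lborel B - measure lborel (B \<inter> E)"
    using finB E(1) Bs(1) by (subst measure_Diff[symmetric]) (auto intro!: arg_cong[where f="measure lborel"])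
  moreover have "measure lborel B = \<omega> * \<rho> ^ DIM('a)" using mB unfolding measure_def
    using rho \<omega>_def by simp
  moreover have "B \<inter> E = E \<inter> B" by auto
  ultimately have mle: "measure lborel (E - B) \<le> measure lborel (B - E)" using mE \<omega>_def by simp
  have emle: "emeasure lborel (E - B) \<le> emeasure lborel (B - E)"
  proof -
    have "emeasure lborel (E - B) \<le> emeasure lborel E" by (intro emeasure_mono) auto
    then have f1: "emeasure lborel (E - B) \<noteq> \<infinity>" using finE by (auto simp: top_unique)
    have "emeasure lborel (B - E) \<le> emeasure lborel B" by (intro emeasure_mono) auto
    then have f2: "emeasure lborel (B - E) \<noteq> \<infinity>" using finB by (auto simp: top_unique)
    show ?thesis using f1 f2 mle by (simp add: emeasure_eq_ennreal_measure ennreal_leI)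
  qed
  have split1: "(\<integral>\<^sup>+y. indicator (-E) y * kern s x y \<partial>lborel) =
     (\<integral>\<^sup>+y. indicator (B - E) y * kern s x y \<partial>lborel) + (\<integral>\<^sup>+y. indicator (-E - B) y * kern s x y \<partial>lborel)"
    by (subst nn_integral_add[symmetric]) (auto intro!: nn_integral_cong split: split_indicator)
  have split2: "(\<integral>\<^sup>+y. indicator (-B) y * kern s x y \<partial>lborel) =
     (\<integral>\<^sup>+y. indicator (E - B) y * kern s x y \<partial>lborel) + (\<integral>\<^sup>+y. indicator (-E - B) y * kern s x y \<partial>lborel)"
    by (subst nn_integral_add[symmetric]) (auto intro!: nn_integral_cong split: split_indicator)
  have i1: "(\<integral>\<^sup>+y. indicator (B - E) y * kern s x y \<partial>lborel) \<ge> K0 * emeasure lborel (B - E)"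
  proof -
    have "(\<integral>\<^sup>+y. indicator (B - E) y * kern s x y \<partial>lborel) \<ge> (\<integral>\<^sup>+y. K0 * indicator (B - E) y \<partial>lborel)"
      unfolding K0_def
      by (intro nn_integral_mono) (auto simp: B_def dist_norm split: split_indicator intro!: kern_ge rho s)
    then show ?thesis by (subst (asm) nn_integral_cmult_indicator) auto
  qed
  have i2: "(\<integral>\<^sup>+y. indicator (E - B) y * kern s x y \<partial>lborel) \<le> K0 * emeasure lborel (E - B)"
  proof -
    have "(\<integral>\<^sup>+y. indicator (E - B) y * kern s x y \<partial>lborel) \<le> (\<integral>\<^sup>+y. K0 * indicator (E - B) y \<partial>lborel)"
      unfolding K0_def
      by (intro nn_integral_mono) (auto simp: B_def dist_norm split: split_indicator intro!: kern_le rho s)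
    then show ?thesis by (subst (asm) nn_integral_cmult_indicator) auto
  qed
  have "(\<integral>\<^sup>+y. indicator (E - B) y * kern s x y \<partial>lborel) \<le> (\<integral>\<^sup>+y. indicator (B - E) y * kern s x y \<partial>lborel)"
    using i1 i2 emle by (meson mult_left_mono order_trans zero_le)
  then have "(\<integral>\<^sup>+y. indicator (-B) y * kern s x y \<partial>lborel) \<le> (\<integral>\<^sup>+y. indicator (-E) y * kern s x y \<partial>lborel)"
    unfolding split1 split2 by (rule add_right_mono)
  moreover have "(\<integral>\<^sup>+y. indicator (-B) y * kern s x y \<partial>lborel) \<ge> K1 * emeasure lborel (B2 - B)"
  proof -
    have "(\<integral>\<^sup>+y. indicator (-B) y * kern s x y \<partial>lborel) \<ge> (\<integral>\<^sup>+y. K1 * indicator (B2 - B) y \<partial>lborel)"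
      unfolding K1_def
      by (intro nn_integral_mono) (auto simp: B_def B2_def dist_norm split: split_indicator intro!: kern_ge rho s)
    then show ?thesis by (subst (asm) nn_integral_cmult_indicator) auto
  qed
  moreover have "emeasure lborel (B2 - B) = ennreal ((2 ^ DIM('a) - 1) * \<omega> * \<rho> ^ DIM('a))"
  proof -
    have "emeasure lborel (B2 - B) = emeasure lborel B2 - emeasure lborel B"
      using BB2 finB by (intro emeasure_Diff) auto
    also have "\<dots> = ennreal (\<omega> * (2*\<rho>) ^ DIM('a) - \<omega> * \<rho> ^ DIM('a))"
      unfolding mB mB2 using rho \<omega>_def by (subst ennreal_minus) (auto intro!: mult_left_mono power_mono)
    also have "\<omega> * (2*\<rho>) ^ DIM('a) - \<omega> * \<rho> ^ DIM('a) = (2 ^ DIM('a) - 1) * \<omega> * \<rho> ^ DIM('a)"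
      by (simp add: power_mult_distrib algebra_simps)
    finally show ?thesis .
  qed
  ultimately show ?thesis unfolding K1_def \<omega>_def using rho
    by (simp add: ennreal_mult'[symmetric] mult.commute order_trans)
qed



lemma geo_sum:
  fixes l v :: real
  assumes "l > 0" "v \<ge> 0"
  shows "(\<Sum>k<n. l*4^k*(if l*4^(Suc k) \<le> v \<and> P k then 1 else 0)) \<le> min v (l*4^n)/3"
proof (induction n)
  case 0 then show ?case using assms by simp
next
  case (Suc n)
  show ?case
  proof (cases "l*4^(Suc n) \<le> v \<and> P n")
    case True
    have "(\<Sum>k<Suc n. l*4^k*(if l*4^(Suc k) \<le> v \<and> P k then 1 else 0)) =
      (\<Sum>k<n. l*4^k*(if l*4^(Suc k) \<le> v \<and> P k then 1 else 0)) + l*4^n"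
      using True by (simp only: sum.lessThan_Suc if_True) simp
    then have "(\<Sum>k<Suc n. l*4^k*(if l*4^(Suc k) \<le> v \<and> P k then 1 else 0)) \<le> min v (l*4^n)/3 + l*4^n"
      using Suc.IH by linarith
    also have "\<dots> \<le> min v (l*4^(Suc n))/3" using True assms by (simp add: min_def)
    finally show ?thesis .
  next
    case False
    have "(\<Sum>k<Suc n. l*4^k*(if l*4^(Suc k) \<le> v \<and> P k then 1 else 0)) =
      (\<Sum>k<n. l*4^k*(if l*4^(Suc k) \<le> v \<and> P k then 1 else 0))"
      using False by (simp only: sum.lessThan_Suc if_False)
    then have "(\<Sum>k<Suc n. l*4^k*(if l*4^(Suc k) \<le> v \<and> P k then 1 else 0)) \<le> min v (l*4^n)/3"
      using Suc.IH by linarith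
    also have "\<dots> \<le> min v (l*4^(Suc n))/3" using assms by (simp add: min_def)
    finally show ?thesis .
  qed
qed

lemma Phi_lower:
  fixes v w :: real
  assumes "0 \<le> w" "4*w < v"
  shows "ennreal (v/3) \<le> Phi v w"
proof (cases "w = 0")
  case True then show ?thesis using assms by (simp add: Phi_def)
next
  case False
  then have w: "w > 0" using assms by simp
  then have v: "v > 0" "v \<noteq> w" using assms by auto
  have "ln (w/v) \<le> w/v - 1" using w v by (intro ln_le_minus_one) auto
  then have l: "ln v - ln w \<ge> 1 - w/v" using w v by (simp add: ln_div)
  have "w/v \<le> 1/4" using assms v by (simp add: field_simps)
  then have l2: "ln v - ln w \<ge> 3/4" using l by linarith
  have vw: "v - w \<ge> 3 * v / 4" using assms by simp
  have "v/3 \<le> (v - w) * (3/4)" using vw v by simp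
  also have "\<dots> \<le> (v - w) * (ln v - ln w)" using l2 assms v
    by (intro mult_left_mono) auto
  finally show ?thesis using v w by (simp add: Phi_def ennreal_leI)
qed

lemma pw:
  fixes v w l :: real
  assumes "0 \<le> v" "0 \<le> w" "l > 0"
  shows "(\<Sum>k. ennreal (l*4^k * (if l*4^(Suc k) \<le> v \<and> w < l*4^k then 1 else 0))) \<le> Phi v w"
proof (cases "\<exists>k. l*4^(Suc k) \<le> v \<and> w < l*4^k")
  case False
  then have "\<And>k. (if l*4^(Suc k) \<le> v \<and> w < l*4^k then 1 else 0) = (0::real)" by auto
  then show ?thesis by simp
next
  case True
  then obtain k where k: "l*4^(Suc k) \<le> v" "w < l*4^k" by auto
  then have "4*w < v" by simp
  then have "ennreal (v/3) \<le> Phi v w" using assms by (intro Phi_lower) auto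
  moreover have "(\<Sum>k. ennreal (l*4^k * (if l*4^(Suc k) \<le> v \<and> w < l*4^k then 1 else 0))) \<le> ennreal (v/3)"
  proof (rule suminf_ennreal_le_real)
    fix n
    show "(\<Sum>k<n. l*4^k * (if l*4^(Suc k) \<le> v \<and> w < l*4^k then 1 else 0)) \<le> v/3"
      using geo_sum[OF assms(3,1), of "\<lambda>k. w < l*4^k" n] by simp
  qed (use assms in simp)
  ultimately show ?thesis by simp
qed



definition cI :: "nat \<Rightarrow> real \<Rightarrow> real" where
  "cI d a = (2 ^ d - 1) * unit_ball_vol (real d) * (1 / 2 powr (real d + a)) * unit_ball_vol (real d) powr (a / real d)"

lemma cI_pos: assumes "d > 0" shows "cI d a > 0"
proof -
  have "(2::real)^d > 1" using assms by (intro one_less_power) auto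
  moreover have h: "unit_ball_vol (real d) > 0" by simp
  moreover have "unit_ball_vol (real d) powr (a / real d) > 0" using h by (metis powr_gt_zero less_irrefl)
  moreover have "1 / 2 powr (real d + a) > 0" by simp
  ultimately show ?thesis unfolding cI_def by (intro mult_pos_pos) simp_all
qed

lemma iso2:
  fixes x :: "'a::euclidean_space" and E :: "'a set"
  assumes E: "E \<in> sets lborel" "emeasure lborel E < \<infinity>" "measure lborel E > 0" and a: "a > 0"
  shows "ennreal (cI DIM('a) a * measure lborel E powr (-(a / DIM('a))))
     \<le> (\<integral>\<^sup>+y. indicator (-E) y * kern (real DIM('a) + a) x y \<partial>lborel)"
proof -
  define d where "d = DIM('a)"
  define \<omega> where "\<omega> = unit_ball_vol (real d)"
  define m where "m = measure lborel E"
  have d: "d > 0" unfolding d_def by simp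
  have \<omega>: "\<omega> > 0" unfolding \<omega>_def by simp
  have m: "m > 0" using E m_def by simp
  define \<rho> where "\<rho> = (m / \<omega>) powr (1 / real d)"
  have \<rho>: "\<rho> > 0" unfolding \<rho>_def using m \<omega> by simp
  have \<rho>d: "\<rho> ^ d = m / \<omega>"
  proof -
    have "\<rho> ^ d = \<rho> powr real d" using \<rho> by (simp add: powr_realpow)
    also have "\<dots> = m / \<omega>" unfolding \<rho>_def using m \<omega> d by (simp add: powr_powr)
    finally show ?thesis .
  qed
  have "measure lborel E \<le> unit_ball_vol (real DIM('a)) * \<rho> ^ DIM('a)"
    using \<rho>d \<omega> unfolding d_def[symmetric] \<omega>_def[symmetric] m_def[symmetric] by simp
  from iso[OF E(1,2) \<rho> this, of "real DIM('a) + a" x] a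
  have h: "ennreal ((2 ^ d - 1) * \<omega> * \<rho> ^ d * (1 / (2*\<rho>) powr (real d + a)))
     \<le> (\<integral>\<^sup>+y. indicator (-E) y * kern (real d + a) x y \<partial>lborel)"
    unfolding d_def \<omega>_def by simp
  have "(2 ^ d - 1) * \<omega> * \<rho> ^ d * (1 / (2*\<rho>) powr (real d + a)) = cI d a * m powr (-(a / d))"
  proof -
    have "(2*\<rho>) powr (real d + a) = 2 powr (real d + a) * (\<rho> powr real d * \<rho> powr a)"
      using \<rho> by (simp add: powr_mult powr_add)
    also have "\<rho> powr real d = \<rho> ^ d" using \<rho> by (simp add: powr_realpow)
    finally have e1: "(2*\<rho>) powr (real d + a) = 2 powr (real d + a) * (\<rho> ^ d * \<rho> powr a)" .
    have "\<rho> powr a = (m / \<omega>) powr (a / d)" unfolding \<rho>_def by (simp add: powr_powr)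
    also have "\<dots> = m powr (a / d) / \<omega> powr (a / d)" using m \<omega> by (intro powr_divide)
    finally have e2: "\<rho> powr a = m powr (a / d) * \<omega> powr (-(a/d))" by (simp add: powr_minus divide_inverse)
    have e3: "m powr (-(a/d)) = 1 / m powr (a/d)" by (simp add: powr_minus divide_inverse)
    have e4: "\<omega> powr (-(a/d)) = 1 / \<omega> powr (a/d)" by (simp add: powr_minus divide_inverse)
    show ?thesis unfolding cI_def e1 e2 e3 \<omega>_def[symmetric] using \<rho> \<omega> m \<rho>d
      by (simp add: e4 field_simps)
  qed
  with h show ?thesis unfolding d_def m_def by simp
qed



lemma markov_level:
  fixes u :: "'a::euclidean_space \<Rightarrow> real"
  assumes ub[measurable]: "u \<in> borel_measurable lborel" and int1: "(\<integral>\<^sup>+ x. ennreal (u x) \<partial>lborel) = 1"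
    and t: "t > 0"
  shows "emeasure lborel {x. t \<le> u x} \<le> ennreal (1/t)"
proof -
  have "ennreal t * emeasure lborel {x. t \<le> u x} = (\<integral>\<^sup>+ x. ennreal t * indicator {x. t \<le> u x} x \<partial>lborel)"
    by (subst nn_integral_cmult_indicator) auto
  also have "\<dots> \<le> (\<integral>\<^sup>+ x. ennreal (u x) \<partial>lborel)"
    by (intro nn_integral_mono) (auto split: split_indicator intro: ennreal_leI)
  finally have h: "ennreal t * emeasure lborel {x. t \<le> u x} \<le> 1" using int1 by simp
  have "emeasure lborel {x. t \<le> u x} = (ennreal (1/t) * ennreal t) * emeasure lborel {x. t \<le> u x}"
    using t by (simp flip: ennreal_mult)
  also have "\<dots> = ennreal (1/t) * (ennreal t * emeasure lborel {x. t \<le> u x})" by (simp add: mult.assoc)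
  also have "\<dots> \<le> ennreal (1/t) * 1" using h by (intro mult_left_mono) auto
  finally show ?thesis by simp
qed

lemma Lp_pointwise:
  fixes v l p :: real
  assumes v: "v \<ge> 0" and l: "l > 0" and p: "p \<ge> 1"
  shows "ennreal (v powr p) \<le> ennreal (l powr (p-1) * v) +
     (\<Sum>k. ennreal (4 powr p * (l*4^k) powr p) * (if l*4^k \<le> v then 1 else 0))"
proof (cases "v < l")
  case True
  have "v powr p \<le> l powr (p-1) * v"
  proof (cases "v = 0")
    case True then show ?thesis by simp
  next
    case False
    then have vp: "v > 0" using v by simp
    have "v powr p = v powr ((p-1) + 1)" by simp
    also have "\<dots> = v powr (p-1) * v powr 1" by (rule powr_add)
    also have "\<dots> \<le> l powr (p-1) * v" using vp True p by (auto intro!: mult_right_mono powr_mono2)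
    finally show ?thesis .
  qed
  then show ?thesis by (intro add_increasing2) (auto intro: ennreal_leI)
next
  case False
  then have "1 \<le> v / l" using l by simp
  have ex: "\<exists>m. 4^m \<le> t \<and> t < 4^(Suc m)" if "1 \<le> t" "t < 4^n" for t :: real and n
    using that
  proof (induction n)
    case 0 then show ?case by simp
  next
    case (Suc n)
    show ?case
    proof (cases "t < 4^n")
      case True then show ?thesis using Suc by blast
    next
      case False
      then have "4^n \<le> t" "t < 4^(Suc n)" using Suc.prems by auto
      then show ?thesis by blast
    qed
  qed
  obtain n where "v / l < 4^n" using real_arch_pow[of 4 "v/l"] by auto
  then obtain m where m: "4^m \<le> v/l" "v/l < 4^(Suc m)" using ex \<open>1 \<le> v/l\<close> by blast
  have m1: "l*4^m \<le> v" "v < 4 * (l * 4^m)" using m l by (auto simp: field_simps)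
  have "v powr p \<le> (4 * (l*4^m)) powr p" using m1 v p by (intro powr_mono2) auto
  also have "\<dots> = 4 powr p * (l*4^m) powr p" using l by (simp add: powr_mult)
  finally have h: "ennreal (v powr p) \<le> ennreal (4 powr p * (l*4^m) powr p) * (if l*4^m \<le> v then 1 else 0)"
    using m1 by (simp add: ennreal_leI)
  also have "\<dots> \<le> (\<Sum>k<Suc m. ennreal (4 powr p * (l*4^k) powr p) * (if l*4^k \<le> v then 1 else 0))"
    by (intro member_le_sum) auto
  also have "\<dots> \<le> (\<Sum>k. ennreal (4 powr p * (l*4^k) powr p) * (if l*4^k \<le> v then 1 else 0))"
    by (rule sum_le_suminf_ennreal)
  finally show ?thesis by (intro add_increasing) auto
qed

lemma energy:
  fixes u :: "'a::euclidean_space \<Rightarrow> real" and a l :: real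
  assumes ub[measurable]: "u \<in> borel_measurable lborel" and unn: "\<And>x. 0 \<le> u x" and l: "l > 0"
    and a: "a > 0"
    and fin: "\<And>k. emeasure lborel {x. l*4^k \<le> u x} < \<infinity>"
  shows "(\<Sum>k. ennreal (l*4^k * (cI DIM('a) a * measure lborel {x. l*4^k \<le> u x} powr (-(a/DIM('a)))
              * measure lborel {x. l*4^(Suc k) \<le> u x})))
     \<le> (\<integral>\<^sup>+ z. Phi (u (fst z)) (u (snd z)) /
               ennreal (norm (fst z - snd z) powr (real DIM('a) + a)) \<partial>(lborel \<Otimes>\<^sub>M lborel))"
proof -
  define s where "s = real DIM('a) + a"
  define A where "A k = {x. l*4^k \<le> u x}" for k :: nat
  define am where "am k = measure lborel (A k)" for k
  define c where "c = cI DIM('a) a"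
  have As[measurable]: "A k \<in> sets lborel" for k unfolding A_def by measurable
  have Ab[simp]: "A k \<in> sets borel" for k using As[of k] by simp
  have eA: "emeasure lborel (A k) = ennreal (am k)" for k
    unfolding am_def using fin[of k] unfolding A_def by (simp add: emeasure_eq_ennreal_measure)
  have c: "c > 0" unfolding c_def by (rule cI_pos) simp
  have amnn: "am k \<ge> 0" for k unfolding am_def by simp
  define T where "T k = (\<integral>\<^sup>+ z. indicator (A (Suc k) \<times> - A k) z * kern s (fst z) (snd z) \<partial>(lborel \<Otimes>\<^sub>M lborel))" for k
  have Cs: "- A k \<in> sets lborel" for k
    using sets.compl_sets[OF As[of k]] by (simp add: Compl_eq_Diff_UNIV)
  have Ps[measurable]: "A (Suc k) \<times> - A k \<in> sets (lborel \<Otimes>\<^sub>M lborel)" for k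
    using As Cs by (intro pair_measureI) auto
  have Km[measurable]: "(\<lambda>z. indicator (A (Suc k) \<times> - A k) z * kern s (fst z) (snd z)) \<in> borel_measurable (lborel \<Otimes>\<^sub>M lborel)" for k
    by measurable
  have Tk: "ennreal (c * am k powr (-(a/DIM('a))) * am (Suc k)) \<le> T k" for k
  proof -
    have "T k = (\<integral>\<^sup>+ x. \<integral>\<^sup>+ y. indicator (A (Suc k) \<times> - A k) (x, y) * kern s x y \<partial>lborel \<partial>lborel)"
      unfolding T_def by (subst lborel.nn_integral_fst[symmetric]) (auto simp: Km)
    also have "\<dots> = (\<integral>\<^sup>+ x. indicator (A (Suc k)) x * (\<integral>\<^sup>+ y. indicator (- A k) y * kern s x y \<partial>lborel) \<partial>lborel)"
      by (intro nn_integral_cong) (auto simp: indicator_times mult.assoc nn_integral_cmult[symmetric] s_def)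
    also have "\<dots> \<ge> (\<integral>\<^sup>+ x. ennreal (c * am k powr (-(a/DIM('a)))) * indicator (A (Suc k)) x \<partial>lborel)"
    proof (intro nn_integral_mono)
      fix x
      have "ennreal (c * am k powr (-(a/DIM('a)))) \<le> (\<integral>\<^sup>+ y. indicator (- A k) y * kern s x y \<partial>lborel)"
      proof (cases "am k = 0")
        case True then show ?thesis by simp
      next
        case False
        then have "am k > 0" using amnn[of k] by simp
        then show ?thesis unfolding c_def s_def am_def
          using As[of k] fin[of k, folded A_def] by (intro iso2 a) auto
      qed
      then show "ennreal (c * am k powr (-(a/DIM('a)))) * indicator (A (Suc k)) x
          \<le> indicator (A (Suc k)) x * (\<integral>\<^sup>+ y. indicator (- A k) y * kern s x y \<partial>lborel)"
        by (auto split: split_indicator)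
    qed
    also have "(\<integral>\<^sup>+ x. ennreal (c * am k powr (-(a/DIM('a)))) * indicator (A (Suc k)) x \<partial>lborel)
        = ennreal (c * am k powr (-(a/DIM('a)))) * ennreal (am (Suc k))"
      by (subst nn_integral_cmult_indicator) (auto simp: eA)
    finally show ?thesis using c amnn by (simp add: ennreal_mult)
  qed
  have "(\<Sum>k. ennreal (l*4^k * (c * am k powr (-(a/DIM('a))) * am (Suc k))))
      \<le> (\<Sum>k. ennreal (l*4^k) * T k)"
    using Tk l c amnn by (intro suminf_mono_ennreal) (auto simp: ennreal_mult intro!: mult_left_mono)
  also have "\<dots> = (\<Sum>k. \<integral>\<^sup>+ z. ennreal (l*4^k) * (indicator (A (Suc k) \<times> - A k) z * kern s (fst z) (snd z)) \<partial>(lborel \<Otimes>\<^sub>M lborel))"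
    unfolding T_def by (subst nn_integral_cmult) (auto simp: Km)
  also have "\<dots> = (\<integral>\<^sup>+ z. (\<Sum>k. ennreal (l*4^k) * (indicator (A (Suc k) \<times> - A k) z * kern s (fst z) (snd z))) \<partial>(lborel \<Otimes>\<^sub>M lborel))"
    by (subst nn_integral_suminf) (auto simp: Km)
  also have "\<dots> \<le> (\<integral>\<^sup>+ z. Phi (u (fst z)) (u (snd z)) / ennreal (norm (fst z - snd z) powr s) \<partial>(lborel \<Otimes>\<^sub>M lborel))"
  proof (intro nn_integral_mono)
    fix z :: "'a \<times> 'a"
    obtain x y where z: "z = (x, y)" by (cases z)
    have eq: "ennreal (l*4^k) * (indicator (A (Suc k) \<times> - A k) z * kern s (fst z) (snd z))
        = ennreal (l*4^k * (if l*4^(Suc k) \<le> u x \<and> u y < l*4^k then 1 else 0)) * kern s x y" for k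
      unfolding z A_def by (auto simp: indicator_def not_le)
    have "(\<Sum>k. ennreal (l*4^k) * (indicator (A (Suc k) \<times> - A k) z * kern s (fst z) (snd z)))
        = (\<Sum>k. ennreal (l*4^k * (if l*4^(Suc k) \<le> u x \<and> u y < l*4^k then 1 else 0))) * kern s x y"
      unfolding eq by (rule ennreal_suminf_multc)
    also have "\<dots> \<le> Phi (u x) (u y) * kern s x y"
      using pw[OF unn unn l] by (intro mult_right_mono) auto
    also have "\<dots> = Phi (u (fst z)) (u (snd z)) / ennreal (norm (fst z - snd z) powr s)"
      unfolding z kern_def by (simp add: divide_ennreal_def)
    finally show "(\<Sum>k. ennreal (l*4^k) * (indicator (A (Suc k) \<times> - A k) z * kern s (fst z) (snd z)))
        \<le> Phi (u (fst z)) (u (snd z)) / ennreal (norm (fst z - snd z) powr s)" .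
  qed
  finally show ?thesis unfolding c_def am_def A_def s_def .
qed

lemma core:
  fixes u :: "'a::euclidean_space \<Rightarrow> real" and a p l :: real
  assumes d2: "DIM('a) \<ge> 2" and a: "0 < a" "a < 2" and p: "1 < p" "p \<le> real DIM('a) / (real DIM('a) - a)"
    and pd: "prob_density u" and fin: "frac_fisher a u < \<infinity>" and l: "l > 0"
  shows "Lp_pow p u \<le> ennreal (l powr (p-1) + 4 powr p * l powr (p - real DIM('a) / (real DIM('a) - a)) *
     (2 * l powr (a / real DIM('a)) + 2 * Kc (a / real DIM('a)) * (2 * enn2real (frac_fisher a u) / cI DIM('a) a))
       powr (real DIM('a) / (real DIM('a) - a)))"
proof -
  define d where "d = real DIM('a)"
  define q where "q = d / (d - a)"
  define r where "r = a / d"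
  define I where "I = enn2real (frac_fisher a u)"
  define c where "c = cI DIM('a) a"
  have dpos: "d \<ge> 2" unfolding d_def using d2 by simp
  have r: "0 < r" "r < 1" unfolding r_def using a dpos by auto
  have qr: "q * (1 - r) = 1" unfolding q_def r_def using a dpos by (simp add: field_simps)
  have c: "c > 0" unfolding c_def by (rule cI_pos) simp
  have ub[measurable]: "u \<in> borel_measurable lborel" and unn: "\<And>x. 0 \<le> u x"
    and int1: "(\<integral>\<^sup>+ x. ennreal (u x) \<partial>lborel) = 1" using pd unfolding prob_density_def by auto
  define A where "A k = {x. l*4^k \<le> u x}" for k :: nat
  define am where "am k = measure lborel (A k)" for k
  have As[measurable]: "A k \<in> sets lborel" for k unfolding A_def by measurable
  have Ab[simp]: "A k \<in> sets borel" for k using As[of k] by simp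
  have mk: "emeasure lborel (A k) \<le> ennreal (1/(l*4^k))" for k
    unfolding A_def using l by (intro markov_level ub int1) auto
  have fink: "emeasure lborel {x. l*4^k \<le> u x} < \<infinity>" for k
    using mk[of k] unfolding A_def by (rule le_less_trans) simp
  have eA: "emeasure lborel (A k) = ennreal (am k)" for k
    unfolding am_def using fink[of k] unfolding A_def by (simp add: emeasure_eq_ennreal_measure)
  have amnn: "am k \<ge> 0" for k unfolding am_def by simp
  have dec: "am (Suc k) \<le> am k" for k
  proof -
    have "emeasure lborel (A (Suc k)) \<le> emeasure lborel (A k)"
      using l by (intro emeasure_mono) (auto simp: A_def intro: order_trans[rotated])
    then show ?thesis unfolding eA using amnn by simp
  qed
  have a0b: "am 0 \<le> 1/l" using mk[of 0] unfolding eA using l by simp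
  have I0: "I \<ge> 0" unfolding I_def by simp
  have fI: "frac_fisher a u = ennreal I" unfolding I_def using fin by simp
  have F: "(\<integral>\<^sup>+ z. Phi (u (fst z)) (u (snd z)) /
               ennreal (norm (fst z - snd z) powr (real DIM('a) + a)) \<partial>(lborel \<Otimes>\<^sub>M lborel)) = ennreal (2*I)"
  proof -
    have "ennreal (2*I) = ennreal 2 * frac_fisher a u" using fI I0 by (simp add: ennreal_mult)
    also have "\<dots> = (ennreal 2 * ennreal (1/2)) * (\<integral>\<^sup>+ z. Phi (u (fst z)) (u (snd z)) /
               ennreal (norm (fst z - snd z) powr (real DIM('a) + a)) \<partial>(lborel \<Otimes>\<^sub>M lborel))"
      unfolding frac_fisher_def by (simp add: mult.assoc)
    also have "ennreal 2 * ennreal (1/2) = 1"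
    proof -
      have "ennreal (2 * (1/2)) = ennreal 2 * ennreal (1/2)" by (rule ennreal_mult) auto
      then show ?thesis by simp
    qed
    finally show ?thesis by simp
  qed
  from energy[OF ub unn l a(1) fink]
  have E: "(\<Sum>k. ennreal (l*4^k * (c * am k powr (-r) * am (Suc k)))) \<le> ennreal (2*I)"
    unfolding F c_def am_def A_def r_def d_def .
  have Bsum: "(\<Sum>k<n. l*4^k * am (Suc k) * am k powr (-r)) \<le> 2*I/c" for n
  proof -
    have "(\<Sum>k<n. ennreal (l*4^k * (c * am k powr (-r) * am (Suc k)))) \<le> ennreal (2*I)"
      using sum_le_suminf_ennreal E by (rule order_trans)
    then have "(\<Sum>k<n. l*4^k * (c * am k powr (-r) * am (Suc k))) \<le> 2*I"
      using l c amnn I0 by (subst (asm) sum_ennreal) (auto simp: ennreal_le_iff)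
    moreover have "(\<Sum>k<n. l*4^k * (c * am k powr (-r) * am (Suc k))) = c * (\<Sum>k<n. l*4^k * am (Suc k) * am k powr (-r))"
      by (simp add: sum_distrib_left mult_ac)
    ultimately show ?thesis using c by (simp add: field_simps)
  qed
  define S where "S = 2 * l powr r + 2 * Kc r * (2*I/c)"
  have Ssum: "(\<Sum>k<n. l*4^k * am k powr (1-r)) \<le> S" for n
    unfolding S_def by (rule disc[OF r l amnn dec a0b Bsum])
  have pq: "1 \<le> p" "p \<le> q" using p unfolding q_def d_def by auto
  have tail: "(\<Sum>k<n. 4 powr p * (l*4^k) powr p * am k) \<le> 4 powr p * l powr (p-q) * S powr q" for n
    by (rule tail_bound[OF r qr pq l amnn Ssum])
  have "Lp_pow p u \<le> (\<integral>\<^sup>+ x. ennreal (l powr (p-1) * u x) +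
     (\<Sum>k. ennreal (4 powr p * (l*4^k) powr p) * indicator (A k) x) \<partial>lborel)"
    unfolding Lp_pow_def
  proof (intro nn_integral_mono)
    fix x
    have "ennreal (\<bar>u x\<bar> powr p) = ennreal (u x powr p)" using unn[of x] by simp
    also have "\<dots> \<le> ennreal (l powr (p-1) * u x) +
     (\<Sum>k. ennreal (4 powr p * (l*4^k) powr p) * (if l*4^k \<le> u x then 1 else 0))"
      using unn[of x] l pq by (intro Lp_pointwise) auto
    also have "(\<lambda>k. ennreal (4 powr p * (l*4^k) powr p) * (if l*4^k \<le> u x then 1 else 0))
       = (\<lambda>k. ennreal (4 powr p * (l*4^k) powr p) * indicator (A k) x)"
      by (auto simp: A_def indicator_def)
    finally show "ennreal (\<bar>u x\<bar> powr p) \<le> ennreal (l powr (p-1) * u x) +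
     (\<Sum>k. ennreal (4 powr p * (l*4^k) powr p) * indicator (A k) x)" .
  qed
  also have "\<dots> = (\<integral>\<^sup>+ x. ennreal (l powr (p-1) * u x) \<partial>lborel) +
     (\<integral>\<^sup>+ x. (\<Sum>k. ennreal (4 powr p * (l*4^k) powr p) * indicator (A k) x) \<partial>lborel)"
    by (rule nn_integral_add) auto
  also have "(\<integral>\<^sup>+ x. ennreal (l powr (p-1) * u x) \<partial>lborel) = ennreal (l powr (p-1))"
  proof -
    have "(\<integral>\<^sup>+ x. ennreal (l powr (p-1) * u x) \<partial>lborel) = (\<integral>\<^sup>+ x. ennreal (l powr (p-1)) * ennreal (u x) \<partial>lborel)"
      using unn by (intro nn_integral_cong) (simp add: ennreal_mult)
    also have "\<dots> = ennreal (l powr (p-1)) * (\<integral>\<^sup>+ x. ennreal (u x) \<partial>lborel)"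
      by (rule nn_integral_cmult) auto
    finally show ?thesis using int1 by simp
  qed
  also have "(\<integral>\<^sup>+ x. (\<Sum>k. ennreal (4 powr p * (l*4^k) powr p) * indicator (A k) x) \<partial>lborel)
      = (\<Sum>k. ennreal (4 powr p * (l*4^k) powr p * am k))"
    using amnn by (subst nn_integral_suminf) (auto simp: nn_integral_cmult_indicator eA ennreal_mult)
  also have "\<dots> \<le> ennreal (4 powr p * l powr (p-q) * S powr q)"
    using amnn l tail by (intro suminf_ennreal_le_real) auto
  finally have "Lp_pow p u \<le> ennreal (l powr (p-1)) + ennreal (4 powr p * l powr (p-q) * S powr q)"
    by simp
  also have "\<dots> = ennreal (l powr (p-1) + 4 powr p * l powr (p-q) * S powr q)"
    using l by (subst ennreal_plus) auto
  finally show ?thesis unfolding S_def q_def r_def d_def I_def c_def .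
qed



theorem lemma3p12:
  fixes a p :: real
  assumes "DIM('a::euclidean_space) \<ge> 2"
    and "0 < a" "a < 2"
    and "1 < p" "p \<le> real DIM('a) / (real DIM('a) - a)"
  shows "\<exists>C>0. \<forall>u :: 'a \<Rightarrow> real. prob_density u \<longrightarrow> frac_fisher a u < \<infinity> \<longrightarrow>
           Lp_pow p u \<le> ennreal ((C * enn2real (frac_fisher a u)
              powr (1 - real DIM('a) / a * (1 / p - (real DIM('a) - a) / real DIM('a)))) powr p)"
proof -
  define d where "d = real DIM('a)"
  define q where "q = d / (d - a)"
  define r where "r = a / d"
  define c where "c = cI DIM('a) a"
  define K2 where "K2 = 2 * Kc r * 2 / c"
  define C0 where "C0 = 1 + 4 powr p * (2 + K2) powr q"
  define e where "e = (p - 1) / r"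
  define \<theta> where "\<theta> = 1 - d / a * (1 / p - (d - a) / d)"
  define C where "C = C0 powr (1/p)"
  have dpos: "d \<ge> 2" unfolding d_def using assms(1) by simp
  have r: "0 < r" "r < 1" unfolding r_def using assms dpos by auto
  have qr: "q * (1 - r) = 1" unfolding q_def r_def using assms dpos by (simp add: field_simps)
  have c: "c > 0" unfolding c_def by (rule cI_pos) simp
  have K2: "K2 > 0" unfolding K2_def using c Kc_pos[of r] by simp
  have q1: "q \<ge> 1" "p \<le> q" using assms unfolding q_def d_def by auto
  have C0: "C0 > 0" unfolding C0_def using K2 by (intro add_pos_nonneg) auto
  have e: "e > 0" unfolding e_def using r assms by simp
  have ex: "(p - q) / r + q = e" unfolding e_def using r qr by (simp add: field_simps)
  have te: "\<theta> * p = e" unfolding \<theta>_def e_def r_def using assms dpos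
    by (simp add: field_simps)
  have main: "Lp_pow p u \<le> ennreal (C0 * J powr e)"
    if pd: "prob_density u" and fin: "frac_fisher a u < \<infinity>" and J: "J > 0" "enn2real (frac_fisher a u) \<le> J"
    for u :: "'a \<Rightarrow> real" and J
  proof -
    define I where "I = enn2real (frac_fisher a u)"
    have I0: "I \<ge> 0" unfolding I_def by simp
    define l where "l = J powr (1/r)"
    have l: "l > 0" unfolding l_def using J by simp
    have lr: "l powr r = J" unfolding l_def using J r by (simp add: powr_powr)
    have "Lp_pow p u \<le> ennreal (l powr (p-1) + 4 powr p * l powr (p - q) * (2 * l powr r + K2 * I) powr q)"
      using core[OF assms pd fin l] unfolding K2_def q_def d_def r_def c_def I_def
      by (simp add: field_simps)
    also have "\<dots> \<le> ennreal (C0 * J powr e)"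
    proof (rule ennreal_leI)
      have "(2 * l powr r + K2 * I) powr q \<le> (2 * l powr r + K2 * J) powr q"
        using I0 J K2 l q1 unfolding I_def by (intro powr_mono2 add_left_mono mult_left_mono) auto
      also have "\<dots> = ((2 + K2) * J) powr q" unfolding lr by (simp add: distrib_right)
      also have "\<dots> = (2 + K2) powr q * J powr q" using K2 J by (simp add: powr_mult)
      finally have h1: "(2 * l powr r + K2 * I) powr q \<le> (2 + K2) powr q * J powr q" .
      have h2: "l powr (p-1) = J powr e" unfolding l_def e_def using J by (simp add: powr_powr)
      have h3: "l powr (p - q) * J powr q = J powr e"
      proof -
        have "l powr (p - q) = J powr ((p - q) / r)" unfolding l_def using J by (simp add: powr_powr)
        then show ?thesis using ex by (simp flip: powr_add)
      qed
      have "4 powr p * l powr (p - q) * (2 * l powr r + K2 * I) powr q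
         \<le> 4 powr p * l powr (p - q) * ((2 + K2) powr q * J powr q)"
        using h1 by (intro mult_left_mono) auto
      also have "\<dots> = 4 powr p * (2 + K2) powr q * (l powr (p - q) * J powr q)" by (simp add: mult_ac)
      also have "\<dots> = 4 powr p * (2 + K2) powr q * J powr e" using h3 by simp
      finally show "l powr (p-1) + 4 powr p * l powr (p - q) * (2 * l powr r + K2 * I) powr q \<le> C0 * J powr e"
        unfolding h2 C0_def by (simp add: distrib_right)
    qed
    finally show ?thesis .
  qed
  have \<theta>eq: "(1 - real DIM('a) / a * (1 / p - (real DIM('a) - a) / real DIM('a))) = \<theta>"
    unfolding \<theta>_def d_def by simp
  have Cp: "C powr p = C0" unfolding C_def using C0 assms by (simp add: powr_powr)
  show ?thesis
  proof (intro exI[of _ C] conjI allI impI)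
    show "C > 0" unfolding C_def using C0 by simp
    fix u :: "'a \<Rightarrow> real"
    assume pd: "prob_density u" and fin: "frac_fisher a u < \<infinity>"
    define I where "I = enn2real (frac_fisher a u)"
    have I0: "I \<ge> 0" unfolding I_def by simp
    have key: "Lp_pow p u \<le> ennreal ((C * I powr \<theta>) powr p)"
    proof (cases "I = 0")
      case False
      then have Ip: "I > 0" using I0 by simp
      have "(C * I powr \<theta>) powr p = C powr p * (I powr \<theta>) powr p"
        using C0 Ip unfolding C_def by (simp add: powr_mult)
      also have "\<dots> = C0 * I powr e" unfolding Cp using te by (simp add: powr_powr)
      finally show ?thesis using main[OF pd fin Ip] unfolding I_def by simp
    next
      case True
      have "Lp_pow p u \<le> 0"
      proof (rule ennreal_le_epsilon)
        fix \<epsilon> :: real assume "\<epsilon> > 0"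
        define J where "J = (\<epsilon> / C0) powr (1/e)"
        have J: "J > 0" unfolding J_def using \<open>\<epsilon> > 0\<close> C0 by simp
        have "C0 * J powr e = \<epsilon>" unfolding J_def using \<open>\<epsilon> > 0\<close> C0 e by (simp add: powr_powr)
        then show "Lp_pow p u \<le> 0 + ennreal \<epsilon>"
          using main[OF pd fin J] True J unfolding I_def by simp
      qed
      then show ?thesis by (simp add: True)
    qed
    then show "Lp_pow p u \<le> ennreal ((C * enn2real (frac_fisher a u)
              powr (1 - real DIM('a) / a * (1 / p - (real DIM('a) - a) / real DIM('a)))) powr p)"
      unfolding I_def \<theta>eq .
  qed
qed

end
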